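(* Let $\Delta\subset\mathbb{R}^2$ be a lattice polygon with $\operatorname{lw}(\Delta)=d$. If $\Delta$ has two linearly independent lattice width directions $v,w\in\mathbb{Z}^2$, then $\operatorname{ls}_\square(\Delta)=d$.
   Context: A lattice polygon is the convex hull of a finite non-empty set of points of $\mathbb{Z}^2$. A lattice direction is a non-zero primitive vector $v\in\mathbb{Z}^2$. For a lattice polygon $\Delta$ and a lattice direction $v$, $\operatorname{lw}_v(\Delta)=\max_{P\in\Delta}\langle P,v\rangle-\min_{P\in\Delta}\langle P,v\rangle$, and the lattice width is $\operatorname{lw}(\Delta)=\min_v\operatorname{lw}_v(\Delta)$ over all lattice directions $v$. A lattice width direction of $\Delta$ is a lattice direction $v$ with $\operatorname{lw}_v(\Delta)=\operatorname{lw}(\Delta)$. A unimodular transformation is a map $x\mapsto Ax+b$ with $A\in\mathrm{GL}_2(\mathbb{Z})$, $b\in\mathbb{Z}^2$; two lattice polygons are equivalent if one is mapped onto the other by a unimodular transformation. With $\square=\operatorname{conv}\{(0,0),(1,0),(1,1),(0,1)\}$, $\operatorname{ls}_\square(\Delta)$ is the smallest integer $d\ge 0$ for which there is a unimodular transformation $\varphi$ with $\varphi(\Delta)\subset d\square=[0,d]\times[0,d]$. *)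

theory Defs
  imports "HOL-Analysis.Analysis"
begin

definition lattice_pt :: "int \<times> int \<Rightarrow> real \<times> real" where
  "lattice_pt p = (real_of_int (fst p), real_of_int (snd p))"

definition lattice_polygon :: "(real \<times> real) set \<Rightarrow> bool" where
  "lattice_polygon \<Delta> \<longleftrightarrow>
     (\<exists>S :: (int \<times> int) set. finite S \<and> S \<noteq> {} \<and> \<Delta> = convex hull (lattice_pt ` S))"

definition lattice_direction :: "int \<times> int \<Rightarrow> bool" where
  "lattice_direction v \<longleftrightarrow> v \<noteq> (0, 0) \<and> gcd (fst v) (snd v) = 1"

definition pair_dot :: "real \<times> real \<Rightarrow> int \<times> int \<Rightarrow> real" where
  "pair_dot P v = fst P * real_of_int (fst v) + snd P * real_of_int (snd v)"

definition lw_dir :: "(real \<times> real) set \<Rightarrow> int \<times> int \<Rightarrow> real" where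
  "lw_dir \<Delta> v = (SUP P\<in>\<Delta>. pair_dot P v) - (INF P\<in>\<Delta>. pair_dot P v)"

definition lw :: "(real \<times> real) set \<Rightarrow> real" where
  "lw \<Delta> = (INF v\<in>{v. lattice_direction v}. lw_dir \<Delta> v)"

definition lattice_width_direction :: "(real \<times> real) set \<Rightarrow> int \<times> int \<Rightarrow> bool" where
  "lattice_width_direction \<Delta> v \<longleftrightarrow> lattice_direction v \<and> lw_dir \<Delta> v = lw \<Delta>"

definition unimodular :: "(real \<times> real \<Rightarrow> real \<times> real) \<Rightarrow> bool" where
  "unimodular \<phi> \<longleftrightarrow>
     (\<exists>a b c e t1 t2 :: int. \<bar>a * e - b * c\<bar> = 1 \<and>
        \<phi> = (\<lambda>(x, y). (of_int a * x + of_int b * y + of_int t1,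
                        of_int c * x + of_int e * y + of_int t2)))"

definition scaled_square :: "nat \<Rightarrow> (real \<times> real) set" where
  "scaled_square d = {(x, y). 0 \<le> x \<and> x \<le> real d \<and> 0 \<le> y \<and> y \<le> real d}"

definition ls_square :: "(real \<times> real) set \<Rightarrow> nat" where
  "ls_square \<Delta> = (LEAST d. \<exists>\<phi>. unimodular \<phi> \<and> \<phi> ` \<Delta> \<subseteq> scaled_square d)"

end

theory Submission
  imports Defs
begin

definition idot :: "int \<times> int \<Rightarrow> int \<times> int \<Rightarrow> int" where
  "idot s u = fst s * fst u + snd s * snd u"

definition Mx :: "(int \<times> int) set \<Rightarrow> int \<times> int \<Rightarrow> int" where
  "Mx S u = Max ((\<lambda>s. idot s u) ` S)"

definition Mn :: "(int \<times> int) set \<Rightarrow> int \<times> int \<Rightarrow> int" where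
  "Mn S u = Min ((\<lambda>s. idot s u) ` S)"

lemma pd_lat: "pair_dot (lattice_pt s) u = real_of_int (idot s u)"
  by (simp add: pair_dot_def lattice_pt_def idot_def)

lemma pd_inner: "pair_dot P u = inner (real_of_int (fst u), real_of_int (snd u)) P"
  by (cases P) (simp add: pair_dot_def inner_real_def mult.commute)

lemma Mx_ge: "finite S \<Longrightarrow> s \<in> S \<Longrightarrow> idot s u \<le> Mx S u"
  unfolding Mx_def by simp

lemma Mn_le: "finite S \<Longrightarrow> s \<in> S \<Longrightarrow> Mn S u \<le> idot s u"
  unfolding Mn_def by simp

lemma Mx_in: "finite S \<Longrightarrow> S \<noteq> {} \<Longrightarrow> \<exists>s\<in>S. idot s u = Mx S u"
  unfolding Mx_def using Max_in[of "(\<lambda>s. idot s u) ` S"] by fastforce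

lemma Mn_in: "finite S \<Longrightarrow> S \<noteq> {} \<Longrightarrow> \<exists>s\<in>S. idot s u = Mn S u"
  unfolding Mn_def using Min_in[of "(\<lambda>s. idot s u) ` S"] by fastforce

lemma bounds:
  assumes "finite S" "P \<in> convex hull (lattice_pt ` S)"
  shows "real_of_int (Mn S u) \<le> pair_dot P u \<and> pair_dot P u \<le> real_of_int (Mx S u)"
proof -
  let ?a = "(real_of_int (fst u), real_of_int (snd u))"
  have s1: "lattice_pt ` S \<subseteq> {x. inner ?a x \<le> real_of_int (Mx S u)}"
  proof
    fix x assume "x \<in> lattice_pt ` S"
    then obtain s where sS: "s \<in> S" and xs: "x = lattice_pt s" by blast
    have "inner ?a x = real_of_int (idot s u)" unfolding xs pd_inner[symmetric] by (rule pd_lat)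
    also have "\<dots> \<le> real_of_int (Mx S u)" using Mx_ge[OF assms(1) sS, of u] by (simp only: of_int_le_iff)
    finally show "x \<in> {x. inner ?a x \<le> real_of_int (Mx S u)}" by (simp only: mem_Collect_eq)
  qed
  have s2: "lattice_pt ` S \<subseteq> {x. inner ?a x \<ge> real_of_int (Mn S u)}"
  proof
    fix x assume "x \<in> lattice_pt ` S"
    then obtain s where sS: "s \<in> S" and xs: "x = lattice_pt s" by blast
    have "inner ?a x = real_of_int (idot s u)" unfolding xs pd_inner[symmetric] by (rule pd_lat)
    moreover have "real_of_int (Mn S u) \<le> real_of_int (idot s u)" using Mn_le[OF assms(1) sS, of u] by (simp only: of_int_le_iff)
    ultimately show "x \<in> {x. inner ?a x \<ge> real_of_int (Mn S u)}" by (simp only: mem_Collect_eq)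
  qed
  have "P \<in> {x. inner ?a x \<le> real_of_int (Mx S u)}"
    using hull_minimal[where S=convex, OF s1 convex_halfspace_le] assms(2) by (rule subsetD)
  moreover have "P \<in> {x. inner ?a x \<ge> real_of_int (Mn S u)}"
    using hull_minimal[where S=convex, OF s2 convex_halfspace_ge] assms(2) by (rule subsetD)
  ultimately show ?thesis unfolding pd_inner[of P u] mem_Collect_eq by (intro conjI)
qed

lemma lwdir:
  assumes "finite S" "S \<noteq> {}"
  shows "lw_dir (convex hull (lattice_pt ` S)) u = real_of_int (Mx S u - Mn S u)"
proof -
  let ?D = "convex hull (lattice_pt ` S)"
  obtain s1 where s1: "s1 \<in> S" "idot s1 u = Mx S u" using Mx_in[OF assms] by blast
  obtain s2 where s2: "s2 \<in> S" "idot s2 u = Mn S u" using Mn_in[OF assms] by blast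
  have h1: "lattice_pt s1 \<in> ?D" "lattice_pt s2 \<in> ?D"
    by (rule hull_subset[THEN subsetD, OF imageI[OF s1(1)]], rule hull_subset[THEN subsetD, OF imageI[OF s2(1)]])
  have "(SUP P\<in>?D. pair_dot P u) = real_of_int (Mx S u)"
  proof (rule cSup_eq_maximum)
    show "real_of_int (Mx S u) \<in> (\<lambda>P. pair_dot P u) ` ?D"
      using imageI[OF h1(1), of "\<lambda>P. pair_dot P u"] unfolding pd_lat s1(2) .
    fix x assume "x \<in> (\<lambda>P. pair_dot P u) ` ?D"
    then obtain P where "P \<in> ?D" "x = pair_dot P u" by blast
    then show "x \<le> real_of_int (Mx S u)" using bounds[OF assms(1), of P u] by (simp only:)
  qed
  moreover have "(INF P\<in>?D. pair_dot P u) = real_of_int (Mn S u)"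
  proof (rule cInf_eq_minimum)
    show "real_of_int (Mn S u) \<in> (\<lambda>P. pair_dot P u) ` ?D"
      using imageI[OF h1(2), of "\<lambda>P. pair_dot P u"] unfolding pd_lat s2(2) .
    fix x assume "x \<in> (\<lambda>P. pair_dot P u) ` ?D"
    then obtain P where "P \<in> ?D" "x = pair_dot P u" by blast
    then show "real_of_int (Mn S u) \<le> x" using bounds[OF assms(1), of P u] by (simp only:)
  qed
  ultimately show ?thesis unfolding lw_dir_def by simp
qed

lemma key:
  fixes v w :: "int \<times> int"
  assumes g: "gcd (fst v) (snd v) = 1"
    and D: "fst v * snd w - snd v * fst w \<noteq> 0"
  shows "\<exists>u a s m. m > 0 \<and> 0 \<le> a \<and> a < m \<and> (s = 1 \<or> s = -1) \<and>
     fst v * snd u - snd v * fst u = 1 \<and>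
     m * fst u = a * fst v + s * fst w \<and> m * snd u = a * snd v + s * snd w"
proof -
  obtain x y where xy: "x * fst v + y * snd v = 1" using bezout_int[of "fst v" "snd v"] g by auto
  define Dt where "Dt = fst v * snd w - snd v * fst w"
  define m where "m = \<bar>Dt\<bar>"
  define s where "s = sgn Dt"
  define c0 where "c0 = - s * (fst w * x + snd w * y)"
  define a where "a = c0 mod m"
  define j where "j = c0 div m"
  define u where "u = (- y - j * fst v, x - j * snd v)"
  have mpos: "m > 0" using D by (simp add: m_def Dt_def)
  have s1: "s = 1 \<or> s = -1" using D by (auto simp: s_def Dt_def sgn_if)
  have ms: "m = s * Dt" by (simp add: m_def s_def abs_sgn)
  have ss: "s * s = 1" using s1 by auto
  have c0: "c0 = m * j + a" by (simp add: a_def j_def)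
  have a0: "0 \<le> a" "a < m" using mpos by (simp_all add: a_def)
  have e1: "m * fst u = a * fst v + s * fst w"
  proof -
    have "m * fst u = - m * y - (c0 - a) * fst v" by (simp add: u_def c0 algebra_simps)
    also have "\<dots> = a * fst v + s * fst w * (x * fst v + y * snd v)"
      unfolding ms c0_def Dt_def by (simp add: algebra_simps)
    finally show ?thesis using xy by simp
  qed
  have e2: "m * snd u = a * snd v + s * snd w"
  proof -
    have "m * snd u = m * x - (c0 - a) * snd v" by (simp add: u_def c0 algebra_simps)
    also have "\<dots> = a * snd v + s * snd w * (x * fst v + y * snd v)"
      unfolding ms c0_def Dt_def by (simp add: algebra_simps)
    finally show ?thesis using xy by simp
  qed
  have dt: "fst v * snd u - snd v * fst u = 1"
    using xy by (simp add: u_def algebra_simps)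
  show ?thesis using mpos a0 s1 dt e1 e2 by blast
qed

lemma diff_bound:
  assumes S: "finite S" "S \<noteq> {}"
    and hv: "Mx S v - Mn S v = D0" and hw: "Mx S w - Mn S w = D0"
    and m: "m > 0" "0 \<le> a" "a < m" "s = 1 \<or> s = -1"
    and e1: "m * fst u = a * fst v + s * fst w"
    and e2: "m * snd u = a * snd v + s * snd w"
  shows "Mx S u - Mn S u \<le> D0"
proof -
  obtain t1 where t1: "t1 \<in> S" "idot t1 u = Mx S u" using Mx_in[OF S] by blast
  obtain t2 where t2: "t2 \<in> S" "idot t2 u = Mn S u" using Mn_in[OF S] by blast
  define p where "p = idot t1 v - idot t2 v"
  define q where "q = idot t1 w - idot t2 w"
  have pb: "\<bar>p\<bar> \<le> D0" using Mx_ge[OF S(1) t1(1), of v] Mn_le[OF S(1) t1(1), of v]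
      Mx_ge[OF S(1) t2(1), of v] Mn_le[OF S(1) t2(1), of v] hv by (simp add: p_def)
  have qb: "\<bar>q\<bar> \<le> D0" using Mx_ge[OF S(1) t1(1), of w] Mn_le[OF S(1) t1(1), of w]
      Mx_ge[OF S(1) t2(1), of w] Mn_le[OF S(1) t2(1), of w] hw by (simp add: q_def)
  have "m * (Mx S u - Mn S u) = a * p + s * q"
  proof -
    have "m * (Mx S u - Mn S u) = fst t1 * (m * fst u) + snd t1 * (m * snd u)
        - fst t2 * (m * fst u) - snd t2 * (m * snd u)"
      unfolding t1(2)[symmetric] t2(2)[symmetric] idot_def by (simp add: algebra_simps)
    also have "\<dots> = a * p + s * q" unfolding e1 e2 p_def q_def idot_def
      by (simp add: algebra_simps)
    finally show ?thesis .
  qed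
  also have "\<dots> \<le> a * D0 + D0"
  proof -
    have "a * p \<le> a * D0" using pb m(2) by (intro mult_left_mono) auto
    moreover have "s * q \<le> D0" using m(4) qb by auto
    ultimately show ?thesis by simp
  qed
  also have "\<dots> = (a + 1) * D0" by (simp add: algebra_simps)
  also have "\<dots> \<le> m * D0" using m pb by (intro mult_right_mono) auto
  finally have "m * (Mx S u - Mn S u) \<le> m * D0" .
  then show ?thesis using m(1) by simp
qed

theorem lemma2p1:
  fixes \<Delta> :: "(real \<times> real) set" and d :: nat and v w :: "int \<times> int"
  assumes "lattice_polygon \<Delta>"
    and "lw \<Delta> = real d"
    and "lattice_width_direction \<Delta> v"
    and "lattice_width_direction \<Delta> w"
    and "fst v * snd w - snd v * fst w \<noteq> 0"
  shows "ls_square \<Delta> = d"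
proof -
  obtain S where S: "finite S" "S \<noteq> {}" and DS: "\<Delta> = convex hull (lattice_pt ` S)"
    using assms(1) unfolding lattice_polygon_def by blast
  have dv: "Mx S v - Mn S v = int d"
  proof -
    have "real_of_int (Mx S v - Mn S v) = real_of_int (int d)"
      using assms(2,3) lwdir[OF S, of v] DS by (simp add: lattice_width_direction_def)
    then show ?thesis by (simp only: of_int_eq_iff)
  qed
  have dw: "Mx S w - Mn S w = int d"
  proof -
    have "real_of_int (Mx S w - Mn S w) = real_of_int (int d)"
      using assms(2,4) lwdir[OF S, of w] DS by (simp add: lattice_width_direction_def)
    then show ?thesis by (simp only: of_int_eq_iff)
  qed
  have g: "gcd (fst v) (snd v) = 1" using assms(3)
    by (simp add: lattice_width_direction_def lattice_direction_def)
  obtain u a s m where m: "m > 0" "0 \<le> a" "a < m" "s = 1 \<or> s = -1"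
    and dt: "fst v * snd u - snd v * fst u = 1"
    and e1: "m * fst u = a * fst v + s * fst w" and e2: "m * snd u = a * snd v + s * snd w"
    using key[OF g assms(5)] by blast
  have du: "Mx S u - Mn S u \<le> int d" using diff_bound[OF S dv dw m e1 e2] .
  define \<phi> where "\<phi> = (\<lambda>(x::real, y::real). (of_int (fst v) * x + of_int (snd v) * y + of_int (- Mn S v),
                        of_int (fst u) * x + of_int (snd u) * y + of_int (- Mn S u)))"
  have uni: "unimodular \<phi>" unfolding unimodular_def \<phi>_def
    by (rule exI[of _ "fst v"], rule exI[of _ "snd v"], rule exI[of _ "fst u"], rule exI[of _ "snd u"],
        rule exI[of _ "- Mn S v"], rule exI[of _ "- Mn S u"]) (simp add: dt)
  have sub: "\<phi> ` \<Delta> \<subseteq> scaled_square d"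
  proof
    fix z assume "z \<in> \<phi> ` \<Delta>"
    then obtain x y where P: "(x, y) \<in> \<Delta>" and z: "z = \<phi> (x, y)" by auto
    have bv: "real_of_int (Mn S v) \<le> pair_dot (x, y) v \<and> pair_dot (x, y) v \<le> real_of_int (Mx S v)"
      using bounds[OF S(1) P[unfolded DS]] .
    have bu: "real_of_int (Mn S u) \<le> pair_dot (x, y) u \<and> pair_dot (x, y) u \<le> real_of_int (Mx S u)"
      using bounds[OF S(1) P[unfolded DS]] .
    have rv: "real_of_int (Mx S v) - real_of_int (Mn S v) = real d"
      using dv by (metis of_int_diff of_int_of_nat_eq)
    have ru: "real_of_int (Mx S u) - real_of_int (Mn S u) \<le> real d"
      using du by (metis of_int_diff of_int_le_iff of_int_of_nat_eq)
    have f1: "real_of_int (fst v) * x + real_of_int (snd v) * y + real_of_int (- Mn S v)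
        = pair_dot (x, y) v - real_of_int (Mn S v)" by (simp add: pair_dot_def mult.commute)
    have f2: "real_of_int (fst u) * x + real_of_int (snd u) * y + real_of_int (- Mn S u)
        = pair_dot (x, y) u - real_of_int (Mn S u)" by (simp add: pair_dot_def mult.commute)
    have c1: "0 \<le> pair_dot (x, y) v - real_of_int (Mn S v)" using conjunct1[OF bv] by (simp only: diff_ge_0_iff_ge)
    have c2: "pair_dot (x, y) v - real_of_int (Mn S v) \<le> real d" using diff_right_mono[OF conjunct2[OF bv], of "real_of_int (Mn S v)"] rv by (simp only:)
    have c3: "0 \<le> pair_dot (x, y) u - real_of_int (Mn S u)" using conjunct1[OF bu] by (simp only: diff_ge_0_iff_ge)
    have c4: "pair_dot (x, y) u - real_of_int (Mn S u) \<le> real d" using order.trans[OF diff_right_mono[OF conjunct2[OF bu], of "real_of_int (Mn S u)"] ru] .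
    show "z \<in> scaled_square d"
      unfolding z \<phi>_def scaled_square_def
      by (simp only: prod.case mem_Collect_eq f1 f2) (intro conjI c1 c2 c3 c4)
  qed
  have low: "d \<le> d'" if U1: "unimodular \<phi>'" and U2: "\<phi>' ` \<Delta> \<subseteq> scaled_square d'" for \<phi>' d'
  proof -
    obtain a b c e t1 t2 :: int where det: "\<bar>a * e - b * c\<bar> = 1" and
      ph: "\<phi>' = (\<lambda>(x::real, y::real). (of_int a * x + of_int b * y + of_int t1, of_int c * x + of_int e * y + of_int t2))"
      using U1 unfolding unimodular_def by (elim exE conjE) auto
    have gd: "gcd a b dvd a * e - b * c" by (simp add: dvd_diff)
    have "gcd a b dvd 1"
    proof -
      have "a * e - b * c = 1 \<or> a * e - b * c = -1" using det by linarith
      then show ?thesis using gd by (metis dvd_minus_iff)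
    qed
    then have g1: "gcd a b = 1" using gcd_ge_0_int[of a b] by (simp add: zdvd1_eq)
    have nz: "(a, b) \<noteq> (0, 0)" using det by auto
    have ld: "lattice_direction (a, b)" using g1 nz by (simp add: lattice_direction_def)
    have bdd: "bdd_below (lw_dir \<Delta> ` {v. lattice_direction v})"
    proof (rule bdd_belowI[of _ 0])
      fix x assume "x \<in> lw_dir \<Delta> ` {v. lattice_direction v}"
      then obtain r where "x = lw_dir \<Delta> r" by blast
      moreover obtain t where "t \<in> S" using S(2) by blast
      ultimately show "0 \<le> x" using lwdir[OF S, of r] DS Mx_ge[OF S(1), of t r] Mn_le[OF S(1), of t r]
        by simp
    qed
    have "lw \<Delta> \<le> lw_dir \<Delta> (a, b)" unfolding lw_def using bdd ld by (intro cINF_lower) auto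
    also have "\<dots> = real_of_int (Mx S (a, b) - Mn S (a, b))" using lwdir[OF S] DS by simp
    also have "\<dots> \<le> real d'"
    proof -
      obtain s1 where s1: "s1 \<in> S" "idot s1 (a, b) = Mx S (a, b)" using Mx_in[OF S] by blast
      obtain s2 where s2: "s2 \<in> S" "idot s2 (a, b) = Mn S (a, b)" using Mn_in[OF S] by blast
      have "lattice_pt s1 \<in> \<Delta>" "lattice_pt s2 \<in> \<Delta>" unfolding DS
        using s1(1) s2(1) by (auto intro: hull_subset[THEN subsetD])
      then have "\<phi>' (lattice_pt s1) \<in> scaled_square d'" "\<phi>' (lattice_pt s2) \<in> scaled_square d'"
        using U2 by blast+
      then have "real_of_int (idot s1 (a, b) + t1) \<le> real d'" "0 \<le> real_of_int (idot s2 (a, b) + t1)"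
        unfolding ph scaled_square_def lattice_pt_def idot_def by (simp_all add: algebra_simps)
      then show ?thesis using s1 s2 by simp
    qed
    finally show ?thesis using assms(2) by simp
  qed
  show ?thesis unfolding ls_square_def
  proof (rule Least_equality)
    show "\<exists>\<phi>. unimodular \<phi> \<and> \<phi> ` \<Delta> \<subseteq> scaled_square d" using uni sub by blast
  next
    fix y assume "\<exists>\<phi>. unimodular \<phi> \<and> \<phi> ` \<Delta> \<subseteq> scaled_square y"
    then obtain \<phi>' where "unimodular \<phi>'" "\<phi>' ` \<Delta> \<subseteq> scaled_square y" by blast
    then show "d \<le> y" by (rule low)
  qed
qed

end
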